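(* Let $\tau_L, \sigma_L, \delta_L \in \mathbb{R}$ and suppose the matrix $$C = \begin{bmatrix} \tau_L & 1 & 0 \\ -\sigma_L & 0 & 1 \\ \delta_L & 0 & 0 \end{bmatrix}$$ has eigenvalues $\lambda_1 < \lambda_2 < \lambda_3 < 0$. Then for the linear system $\dot y = C y$, the forward orbit $\phi(t)$ of any point $\phi(0) = (0,0,z)$ with $z < 0$ satisfies $\phi_1(t) < 0$ for all $t > 0$.
   Context: Here $y = (y_1,y_2,y_3) \in \mathbb{R}^3$ and $\phi(t) = (\phi_1(t),\phi_2(t),\phi_3(t))$; the initial points considered are those on the line $\{y_1 = y_2 = 0\}$ with negative third coordinate. *)

theory Defs
  imports "HOL-Analysis.Analysis"
begin

definition Cmat :: "real \<Rightarrow> real \<Rightarrow> real \<Rightarrow> real^3^3" where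
  "Cmat \<tau> \<sigma> \<delta> = vector [vector [\<tau>, 1, 0], vector [-\<sigma>, 0, 1], vector [\<delta>, 0, 0]]"

definition real_eigenvalues :: "real^'n^'n \<Rightarrow> real set" where
  "real_eigenvalues A = {\<mu>. \<exists>v. v \<noteq> 0 \<and> A *v v = \<mu> *\<^sub>R v}"

end

theory Submission
  imports Defs
begin

lemma eig_root:
  assumes "l \<in> real_eigenvalues (Cmat \<tau> \<sigma> \<delta>)"
  shows "l^3 = \<tau>*l^2 - \<sigma>*l + \<delta>"
proof -
  obtain v where v: "v \<noteq> 0" "Cmat \<tau> \<sigma> \<delta> *v v = l *\<^sub>R v"
    using assms unfolding real_eigenvalues_def by blast
  have e: "(Cmat \<tau> \<sigma> \<delta> *v v) $ i = (l *\<^sub>R v) $ i" for i using v(2) by simp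
  have e1: "\<tau> * v $ 1 + v $ 2 = l * v $ 1" using e[of 1]
    by (simp add: Cmat_def matrix_vector_mult_def sum_3)
  have e2: "-\<sigma> * v $ 1 + v $ 3 = l * v $ 2" using e[of 2]
    by (simp add: Cmat_def matrix_vector_mult_def sum_3)
  have e3: "\<delta> * v $ 1 = l * v $ 3" using e[of 3]
    by (simp add: Cmat_def matrix_vector_mult_def sum_3)
  have "v $ 1 \<noteq> 0"
  proof
    assume h: "v $ 1 = 0"
    then have "v $ 2 = 0" using e1 by simp
    then have "v $ 3 = 0" using e2 h by simp
    then have "v = 0" using h \<open>v $ 2 = 0\<close>
      by (metis (full_types) exhaust_3 vec_eq_iff zero_index)
    then show False using v(1) by simp
  qed
  have "v $ 2 = (l-\<tau>)* v $ 1" using e1 by (simp add: algebra_simps)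
  moreover have "v $ 3 = l* v $ 2 + \<sigma>* v $ 1" using e2 by (simp add: algebra_simps)
  ultimately have "\<delta> * v $ 1 = l * (l * ((l-\<tau>) * v $ 1) + \<sigma> * v $ 1)" using e3 by simp
  then have "\<delta> * v $ 1 = (l^3 - \<tau>*l^2 + \<sigma>*l) * v $ 1"
    by (simp add: algebra_simps power2_eq_square power3_eq_cube)
  then show ?thesis using \<open>v $ 1 \<noteq> 0\<close> by simp
qed

lemma eig_sol:
  fixes \<phi> :: "real \<Rightarrow> real^3"
  assumes root: "l^3 = \<tau>*l^2 - \<sigma>*l + \<delta>"
    and init: "\<phi> 0 = vector [0, 0, z]"
    and ode: "\<And>t. t \<ge> 0 \<Longrightarrow> (\<phi> has_vector_derivative (Cmat \<tau> \<sigma> \<delta> *v \<phi> t)) (at t within {0..})"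
    and t: "t \<ge> 0"
  shows "l^2 * \<phi> t $ 1 + l * \<phi> t $ 2 + \<phi> t $ 3 = z * exp (l*t)"
proof -
  define w :: "real^3" where "w = vector [l^2, l, 1]"
  have wi: "w \<bullet> x = l^2 * x$1 + l * x$2 + x$3" for x
    by (simp add: w_def inner_vec_def sum_3)
  have D: "((\<lambda>s. w \<bullet> \<phi> s) has_field_derivative l * (w \<bullet> \<phi> s)) (at s within {0..})" if "s \<ge> 0" for s
  proof -
    have "((\<lambda>s. w \<bullet> \<phi> s) has_vector_derivative (w \<bullet> (Cmat \<tau> \<sigma> \<delta> *v \<phi> s))) (at s within {0..})"
      by (rule bounded_linear.has_vector_derivative[OF bounded_linear_inner_right ode[OF that]])
    moreover have "w \<bullet> (Cmat \<tau> \<sigma> \<delta> *v \<phi> s) = l * (w \<bullet> \<phi> s)"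
    proof -
      have "w \<bullet> (Cmat \<tau> \<sigma> \<delta> *v \<phi> s) = (\<tau>*l^2 - \<sigma>*l + \<delta>) * \<phi> s $ 1 + l^2 * \<phi> s $ 2 + l * \<phi> s $ 3"
        unfolding wi by (simp add: Cmat_def matrix_vector_mult_def sum_3 algebra_simps power2_eq_square)
      also have "\<dots> = l * (w \<bullet> \<phi> s)" unfolding root[symmetric] wi
        by (simp add: algebra_simps power2_eq_square power3_eq_cube)
      finally show ?thesis .
    qed
    ultimately show ?thesis by (simp add: has_real_derivative_iff_has_vector_derivative)
  qed
  have K: "((\<lambda>s. exp (- (l * s)) * (w \<bullet> \<phi> s)) has_field_derivative 0) (at s within {0..})" if "s \<in> {0..}" for s
  proof -
    have "((\<lambda>s. exp (- (l * s)) * (w \<bullet> \<phi> s)) has_field_derivative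
       (exp (- (l * s)) * (-(l*1))) * (w \<bullet> \<phi> s) + exp (- (l * s)) * (l * (w \<bullet> \<phi> s))) (at s within {0..})"
      using that D[of s] by (auto intro!: derivative_eq_intros)
    then show ?thesis by (simp add: algebra_simps)
  qed
  obtain c where c: "\<forall>s\<in>{0..}. exp (- (l * s)) * (w \<bullet> \<phi> s) = c"
    using has_field_derivative_zero_constant[OF convex_real_interval(1) K] by blast
  have c0: "c = z" using c[rule_format, of 0] init by (simp add: wi)
  have "exp (-(l*t)) * (w \<bullet> \<phi> t) = z" using c t c0 by auto
  then have "w \<bullet> \<phi> t = z * exp (l*t)"
    by (metis exp_minus_inverse mult.assoc mult.commute mult.right_neutral)
  then show ?thesis by (simp add: wi)
qed

lemma slope_mono:
  fixes a b c t :: real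
  assumes "a < b" "b < c" "t > 0"
  shows "(exp (b*t) - exp (a*t)) / (b - a) < (exp (c*t) - exp (b*t)) / (c - b)"
proof -
  have d: "\<And>x. DERIV (\<lambda>x. exp (x*t)) x :> t * exp (x*t)"
    by (auto intro!: derivative_eq_intros)
  obtain x where x: "a < x" "x < b" "exp (b*t) - exp (a*t) = (b-a) * (t * exp (x*t))"
    using MVT2[OF assms(1), of "\<lambda>x. exp (x*t)" "\<lambda>x. t * exp (x*t)"] d by blast
  obtain y where y: "b < y" "y < c" "exp (c*t) - exp (b*t) = (c-b) * (t * exp (y*t))"
    using MVT2[OF assms(2), of "\<lambda>x. exp (x*t)" "\<lambda>x. t * exp (x*t)"] d by blast
  have "x*t < y*t" using x y assms by simp
  then have "t * exp (x*t) < t * exp (y*t)" using assms by simp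
  then show ?thesis using x y assms by simp
qed

theorem lemmaB1:
  fixes \<tau> \<sigma> \<delta> l1 l2 l3 z :: real and \<phi> :: "real \<Rightarrow> real^3"
  assumes eig: "real_eigenvalues (Cmat \<tau> \<sigma> \<delta>) = {l1, l2, l3}"
    and ord: "l1 < l2" "l2 < l3" "l3 < 0"
    and init: "\<phi> 0 = vector [0, 0, z]" and z: "z < 0"
    and ode: "\<And>t. t \<ge> 0 \<Longrightarrow> (\<phi> has_vector_derivative (Cmat \<tau> \<sigma> \<delta> *v \<phi> t)) (at t within {0..})"
  shows "\<forall>t>0. \<phi> t $ 1 < 0"
proof (intro allI impI)
  fix t :: real assume t: "t > 0"
  have r: "l^3 = \<tau>*l^2 - \<sigma>*l + \<delta>" if "l \<in> {l1,l2,l3}" for l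
    using eig_root[of l] that eig by simp
  define x where "x = \<phi> t $ 1"
  define y where "y = \<phi> t $ 2"
  define w where "w = \<phi> t $ 3"
  have E: "l^2 * x + l * y + w = z * exp (l*t)" if "l \<in> {l1,l2,l3}" for l
    using eig_sol[OF r[OF that] init ode] t unfolding x_def y_def w_def by simp
  define s12 where "s12 = (exp (l2*t) - exp (l1*t)) / (l2 - l1)"
  define s23 where "s23 = (exp (l3*t) - exp (l2*t)) / (l3 - l2)"
  have a: "(l2 + l1) * x + y = z * s12"
  proof -
    have "(l2^2 - l1^2) * x + (l2 - l1) * y = z * (exp (l2*t) - exp (l1*t))"
      using E[of l1] E[of l2] by (simp add: algebra_simps)
    moreover have "(l2 - l1) * s12 = exp (l2*t) - exp (l1*t)" using ord by (simp add: s12_def)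
    ultimately have "(l2 - l1) * ((l2 + l1) * x + y) = (l2 - l1) * (z * s12)"
      by (metis (no_types, lifting) mult.left_commute power2_eq_square square_diff_square_factored
          distrib_left mult.assoc)
    then show ?thesis using ord by simp
  qed
  have b: "(l3 + l2) * x + y = z * s23"
  proof -
    have "(l3^2 - l2^2) * x + (l3 - l2) * y = z * (exp (l3*t) - exp (l2*t))"
      using E[of l3] E[of l2] by (simp add: algebra_simps)
    moreover have "(l3 - l2) * s23 = exp (l3*t) - exp (l2*t)" using ord by (simp add: s23_def)
    ultimately have "(l3 - l2) * ((l3 + l2) * x + y) = (l3 - l2) * (z * s23)"
      by (metis (no_types, lifting) mult.left_commute power2_eq_square square_diff_square_factored
          distrib_left mult.assoc)
    then show ?thesis using ord by simp
  qed
  have "(l3 - l1) * x = z * (s23 - s12)" using a b by (simp add: algebra_simps)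
  moreover have "s12 < s23" unfolding s12_def s23_def by (rule slope_mono[OF ord(1,2) t])
  ultimately have "(l3 - l1) * x < 0" using z by (simp add: mult_neg_pos)
  then show "\<phi> t $ 1 < 0" using ord unfolding x_def
    by (smt (verit) mult_nonneg_nonneg)
qed

end
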